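(* Let $p_s\in(0,1)$, $p_f=1-p_s$, and let $p_{-1},p_0,p_1\in[0,1]$ with $p_{-1}+p_0+p_1=1$. Let $(h(t))$ be i.i.d. with $\mathbb{P}[h(t)=1]=p_s$, $\mathbb{P}[h(t)=0]=p_f$, and let $(\delta(t))$ be i.i.d., independent of $(h(t))$, with $\mathbb{P}[\delta(t)=k]=p_k$ for $k\in\{-1,0,1\}$. Define $$\Delta(t)=\begin{cases}\max\{1,\delta(t)+1\}, & h(t)=1,\\ \max\{1,\ \Delta(t-1)+\delta(t)-\delta(t-1)+1\}, & h(t)=0,\end{cases}$$ and $F=1-p_s(1-p_{-1})$. Then in steady state $$\mathbb{P}[\Delta(t)=i]=\begin{cases} p_0p_s+p_{-1}p_s\big(1+p_f(1-p_{-1})\big), & i=1,\\ p_{-1}p_sp_fF+p_0p_sp_f(1-p_{-1})+p_1p_s, & i=2,\\ \big(p_{-1}p_sp_f^2+p_0p_sp_f\big)F+p_1p_sp_f(1-p_{-1}), & i=3,\\ \big(p_{-1}p_sp_f^{\,i-1}+p_0p_sp_f^{\,i-2}+p_1p_sp_f^{\,i-3}\big)F, & i\ge4,\end{cases}$$ and the average AoI is $$\bar\Delta=\sum_{i=1}^\infty i\,\mathbb{P}[\Delta(t)=i]=p_1+\frac{1}{p_s}.$$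
   Context: Model: $h(t)=1$ means successful decoding at the receiver in slot $t$; $\delta(t)\in\{-1,0,1\}$ is the random clock drift (in slots) of the receiver's clock relative to the transmitter's clock; $\Delta(t)$ is the age of information at the receiver. "Steady state" refers to the stationary distribution of the Markov chain $(\delta(t),\Delta(t))$, i.e. the limit as $t\to\infty$. *)

theory Defs
  imports "HOL-Probability.Probability_Mass_Function"
begin

text \<open>One-step transition kernel of the Markov chain (delta(t), Delta(t)).
  From state (d, a) = (delta(t-1), Delta(t-1)) draw h(t) ~ Bernoulli(ps) and,
  independently, delta(t) ~ D; then
  Delta(t) = max 1 (delta(t)+1) if h(t)=1, else max 1 (Delta(t-1)+delta(t)-delta(t-1)+1).\<close>
definition aoi_kernel :: "real \<Rightarrow> int pmf \<Rightarrow> int \<times> nat \<Rightarrow> (int \<times> nat) pmf" where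
  "aoi_kernel ps D = (\<lambda>(d, a).
     bind_pmf (bernoulli_pmf ps) (\<lambda>h.
     bind_pmf D (\<lambda>d'.
       return_pmf (d', if h then nat (max 1 (d' + 1))
                        else nat (max 1 (int a + d' - d + 1))))))"

definition stationary_pmf :: "('s \<Rightarrow> 's pmf) \<Rightarrow> 's pmf \<Rightarrow> bool" where
  "stationary_pmf K \<pi> \<longleftrightarrow> bind_pmf \<pi> K = \<pi>"

definition aoi_ss :: "real \<Rightarrow> real \<Rightarrow> real \<Rightarrow> real \<Rightarrow> nat \<Rightarrow> real" where
  "aoi_ss ps qm q0 q1 i =
    (let pf = 1 - ps; F = 1 - ps * (1 - qm) in
     if i = 1 then q0 * ps + qm * ps * (1 + pf * (1 - qm))
     else if i = 2 then qm * ps * pf * F + q0 * ps * pf * (1 - qm) + q1 * ps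
     else if i = 3 then (qm * ps * pf ^ 2 + q0 * ps * pf) * F + q1 * ps * pf * (1 - qm)
     else (qm * ps * pf ^ (i - 1) + q0 * ps * pf ^ (i - 2) + q1 * ps * pf ^ (i - 3)) * F)"

end

theory Submission
  imports Defs
begin

definition rr :: "int \<Rightarrow> int" where "rr d = (if d = -1 then 2 else 1)"

definition JJ :: "real \<Rightarrow> int pmf \<Rightarrow> int \<Rightarrow> (int \<times> int) pmf" where
  "JJ ps D b = bind_pmf (bernoulli_pmf ps) (\<lambda>h. bind_pmf D (\<lambda>d'. return_pmf (d', if h then rr d' else b + 1)))"

definition stepG :: "real \<Rightarrow> int pmf \<Rightarrow> int pmf \<Rightarrow> int pmf" where
  "stepG ps D G = bind_pmf (bernoulli_pmf ps) (\<lambda>h. if h then map_pmf rr D else map_pmf (\<lambda>b. b + 1) G)"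

definition Gexp :: "real \<Rightarrow> int pmf \<Rightarrow> int pmf" where
  "Gexp ps D = bind_pmf (geometric_pmf ps) (\<lambda>k. map_pmf (\<lambda>x. x + int k) (map_pmf rr D))"

definition Phi :: "int \<times> int \<Rightarrow> int \<times> nat" where "Phi = (\<lambda>(d, b). (d, nat (b + d)))"
definition Psi :: "int \<times> nat \<Rightarrow> int \<times> int" where "Psi = (\<lambda>(d, a). (d, int a - d))"

lemma setD:
  fixes D :: "int pmf"
  assumes "pmf D (-1) + pmf D 0 + pmf D 1 = 1"
  shows "set_pmf D \<subseteq> {-1,0,1}"
proof
  fix x assume x: "x \<in> set_pmf D"
  show "x \<in> {-1,0,1}"
  proof (rule ccontr)
    assume nx: "x \<notin> {-1,0,1}"
    have "measure D (insert x {-1,0,1}) = sum (pmf D) (insert x {-1,0,1})"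
      by (rule measure_measure_pmf_finite) simp
    also have "\<dots> = pmf D x + 1" using nx assms by simp
    finally have "pmf D x + 1 \<le> 1" using measure_pmf.prob_le_1 by metis
    hence "pmf D x = 0" using pmf_nonneg[of D x] by linarith
    thus False using x by (simp add: set_pmf_iff)
  qed
qed

lemma pmf_bind_D:
  fixes D :: "int pmf"
  assumes "set_pmf D \<subseteq> {-1,0,1}"
  shows "pmf (bind_pmf D f) x = pmf (f (-1)) x * pmf D (-1) + pmf (f 0) x * pmf D 0 + pmf (f 1) x * pmf D 1"
proof -
  have "pmf (bind_pmf D f) x = (\<Sum>a\<in>{-1,0,1}. pmf (f a) x * pmf D a)"
    unfolding pmf_bind using assms by (subst integral_measure_pmf_real[of "{-1,0,1}"]) auto
  thus ?thesis by simp
qed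

lemma pmf_map_D:
  fixes D :: "int pmf"
  assumes "set_pmf D \<subseteq> {-1,0,1}"
  shows "pmf (map_pmf g D) x = (if g (-1) = x then pmf D (-1) else 0) + (if g 0 = x then pmf D 0 else 0)
     + (if g 1 = x then pmf D 1 else 0)"
  unfolding map_pmf_def by (subst pmf_bind_D[OF assms]) (simp add: indicator_def)

lemma pmf_R:
  fixes D :: "int pmf"
  assumes "set_pmf D \<subseteq> {-1,0,1}"
  shows "pmf (map_pmf rr D) x = (if x = 1 then pmf D 0 + pmf D 1 else if x = 2 then pmf D (-1) else 0)"
  using pmf_map_D[OF assms, of rr x] by (auto simp: rr_def)

lemma Gexp_fix:
  assumes "0 < ps" "ps < 1"
  shows "stepG ps D (Gexp ps D) = Gexp ps D"
proof -
  have g: "geometric_pmf ps = bind_pmf (bernoulli_pmf ps) (\<lambda>b. if b then return_pmf 0 else map_pmf Suc (geometric_pmf ps))"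
    using geometric_bind_pmf_unfold[of ps] assms by simp
  show ?thesis
    apply (subst (2) Gexp_def, subst g)
    apply (simp add: bind_assoc_pmf stepG_def)
    apply (rule bind_pmf_cong, simp)
    apply (auto simp: bind_return_pmf bind_map_pmf Gexp_def map_bind_pmf map_pmf_comp ac_simps)
    done
qed

lemma pmf_shift1: "pmf (map_pmf (\<lambda>b::int. b + 1) G) x = pmf G (x - 1)"
proof -
  have "pmf (map_pmf (\<lambda>b::int. b + 1) G) ((x - 1) + 1) = pmf G (x - 1)"
    by (rule pmf_map_inj') (simp add: inj_on_def)
  thus ?thesis by simp
qed

lemma rec_step:
  assumes "0 < ps" "ps < 1" "G = stepG ps D G"
  shows "pmf G x = ps * pmf (map_pmf rr D) x + (1 - ps) * pmf G (x - 1)"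
proof -
  have "pmf G x = pmf (stepG ps D G) x" using assms(3) by (rule arg_cong)
  also have "\<dots> = ps * pmf (map_pmf rr D) x + (1 - ps) * pmf G (x - 1)"
    unfolding stepG_def pmf_bind using assms(1,2) by (simp add: pmf_shift1 mult.commute)
  finally show ?thesis .
qed

lemma set_Gexp:
  assumes "set_pmf D \<subseteq> {-1,0,1}"
  shows "set_pmf (Gexp ps D) \<subseteq> {1..}"
  using assms unfolding Gexp_def by (auto simp: rr_def)

lemma Gexp_unique:
  assumes "0 < ps" "ps < 1" "set_pmf D \<subseteq> {-1,0,1}"
    and "G = stepG ps D G" "set_pmf G \<subseteq> {1..}"
  shows "G = Gexp ps D"
proof -
  have fixE: "Gexp ps D = stepG ps D (Gexp ps D)" using Gexp_fix[OF assms(1,2)] by simp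
  have z: "pmf G x = 0" "pmf (Gexp ps D) x = 0" if "x \<le> 0" for x
    using that assms(5) set_Gexp[OF assms(3), of ps] by (auto simp: set_pmf_iff)
  have n: "pmf G (int n) = pmf (Gexp ps D) (int n)" for n
  proof (induction n)
    case 0 then show ?case using z by simp
  next
    case (Suc n)
    show ?case
      using rec_step[OF assms(1,2,4), of "int (Suc n)"] rec_step[OF assms(1,2) fixE, of "int (Suc n)"] Suc
      by simp
  qed
  show ?thesis
  proof (rule pmf_eqI)
    fix x :: int
    show "pmf G x = pmf (Gexp ps D) x"
    proof (cases "x \<le> 0")
      case True then show ?thesis using z by simp
    next
      case False then have "x = int (nat x)" by simp
      then show ?thesis using n by metis
    qed
  qed
qed

definition gv :: "real \<Rightarrow> real \<Rightarrow> int \<Rightarrow> real" where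
  "gv ps qm x = (if x \<le> 0 then 0 else if x = 1 then ps * (1 - qm)
     else ps * (1 - ps) ^ (nat x - 1) * (1 - qm) + ps * (1 - ps) ^ (nat x - 2) * qm)"

lemma Gexp_val:
  assumes "0 < ps" "ps < 1" "set_pmf D \<subseteq> {-1,0,1}" "pmf D (-1) + pmf D 0 + pmf D 1 = 1"
  shows "pmf (Gexp ps D) x = gv ps (pmf D (-1)) x"
proof -
  have fixE: "Gexp ps D = stepG ps D (Gexp ps D)" using Gexp_fix[OF assms(1,2)] by simp
  have z: "pmf (Gexp ps D) x = 0" if "x \<le> 0" for x
    using that set_Gexp[OF assms(3), of ps] by (auto simp: set_pmf_iff)
  have n: "pmf (Gexp ps D) (int n) = gv ps (pmf D (-1)) (int n)" for n
  proof (induction n)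
    case 0 then show ?case using z by (simp add: gv_def)
  next
    case (Suc n)
    have R1: "pmf (map_pmf rr D) 1 = 1 - pmf D (-1)" using pmf_R[OF assms(3), of 1] assms(4) by simp
    have R2: "pmf (map_pmf rr D) 2 = pmf D (-1)" using pmf_R[OF assms(3), of 2] by simp
    have R3: "pmf (map_pmf rr D) x = 0" if "x > 2" for x using pmf_R[OF assms(3), of x] that by simp
    have r: "pmf (Gexp ps D) (int (Suc n)) = ps * pmf (map_pmf rr D) (int (Suc n)) + (1 - ps) * gv ps (pmf D (-1)) (int n)"
      using rec_step[OF assms(1,2) fixE, of "int (Suc n)"] Suc by simp
    show ?case
    proof (cases "n = 0")
      case True then show ?thesis using r R1 by (simp add: gv_def)
    next
      case False
      show ?thesis
      proof (cases "n = 1")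
        case True then show ?thesis using r R2 by (simp add: gv_def algebra_simps)
      next
        case False
        then obtain m where m: "n = Suc (Suc m)" using \<open>n \<noteq> 0\<close> \<open>n \<noteq> 1\<close> by (metis One_nat_def not0_implies_Suc)
        have "pmf (map_pmf rr D) (int (Suc n)) = 0" using R3 m by simp
        moreover have g1: "gv ps (pmf D (-1)) (int n) = ps*(1-ps)^(m+1)*(1-pmf D (-1)) + ps*(1-ps)^m*pmf D (-1)"
          unfolding gv_def m by (simp add: nat_add_distrib)
        moreover have g2: "gv ps (pmf D (-1)) (int (Suc n)) = ps*(1-ps)^(m+2)*(1-pmf D (-1)) + ps*(1-ps)^(m+1)*pmf D (-1)"
          unfolding gv_def m by (simp add: nat_add_distrib)
        ultimately have "pmf (Gexp ps D) (int (Suc n)) = (1-ps) * (ps*(1-ps)^(m+1)*(1-pmf D (-1)) + ps*(1-ps)^m*pmf D (-1))"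
          using r by simp
        also have "\<dots> = ps*(1-ps)^(m+2)*(1-pmf D (-1)) + ps*(1-ps)^(m+1)*pmf D (-1)"
          by (simp add: power_add algebra_simps)
        finally show ?thesis using g2 by simp
      qed
    qed
  qed
  show ?thesis
  proof (cases "x \<le> 0")
    case True then show ?thesis using z by (simp add: gv_def)
  next
    case False then have "x = int (nat x)" by simp
    then show ?thesis using n by metis
  qed
qed

lemma set_K:
  assumes "0 < ps" "ps < 1" "(d, a) \<in> set_pmf (aoi_kernel ps D (d0, a0))"
  shows "\<exists>h. d \<in> set_pmf D \<and> a = (if h then nat (max 1 (d + 1)) else nat (max 1 (int a0 + d - d0 + 1)))"
  using assms unfolding aoi_kernel_def by auto

lemma supp_stat:
  assumes "0 < ps" "ps < 1" "set_pmf D \<subseteq> {-1,0,1}" "stationary_pmf (aoi_kernel ps D) \<pi>"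
    and "(d, a) \<in> set_pmf \<pi>"
  shows "d \<in> {-1,0,1} \<and> 1 \<le> a \<and> 1 \<le> int a - d"
proof -
  have S: "set_pmf \<pi> = (\<Union>y\<in>set_pmf \<pi>. set_pmf (aoi_kernel ps D y))"
    using assms(4) unfolding stationary_pmf_def by (metis set_bind_pmf)
  have weak: "d \<in> {-1,0,1} \<and> 1 \<le> a" if "(d, a) \<in> set_pmf \<pi>" for d a
  proof -
    have "(d, a) \<in> (\<Union>y\<in>set_pmf \<pi>. set_pmf (aoi_kernel ps D y))" using that S by metis
    then obtain d0 a0 where "(d0, a0) \<in> set_pmf \<pi>" "(d, a) \<in> set_pmf (aoi_kernel ps D (d0, a0))"
      by auto
    then obtain h where "d \<in> set_pmf D" "a = (if h then nat (max 1 (d + 1)) else nat (max 1 (int a0 + d - d0 + 1)))"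
      using set_K[OF assms(1,2)] by blast
    then show ?thesis using assms(3) by auto
  qed
  have "(d, a) \<in> (\<Union>y\<in>set_pmf \<pi>. set_pmf (aoi_kernel ps D y))" using assms(5) S by metis
  then obtain d0 a0 where y: "(d0, a0) \<in> set_pmf \<pi>" "(d, a) \<in> set_pmf (aoi_kernel ps D (d0, a0))"
    by auto
  then obtain h where h: "d \<in> set_pmf D" "a = (if h then nat (max 1 (d + 1)) else nat (max 1 (int a0 + d - d0 + 1)))"
    using set_K[OF assms(1,2)] by blast
  have w0: "d0 \<in> {-1,0,1}" "1 \<le> a0" using weak[OF y(1)] by auto
  show ?thesis using h w0 assms(3) by (cases h) auto
qed

lemma K_eq:
  assumes "set_pmf D \<subseteq> {-1,0,1}" "d \<in> {-1,0,1}" "1 \<le> int a - d"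
  shows "aoi_kernel ps D (d, a) = map_pmf Phi (JJ ps D (int a - d))"
  unfolding aoi_kernel_def JJ_def map_bind_pmf
  apply simp
  apply (rule bind_pmf_cong, simp)
  apply (rule bind_pmf_cong, simp)
  using assms by (auto simp: Phi_def rr_def)

lemma set_JJ:
  assumes "set_pmf D \<subseteq> {-1,0,1}" "1 \<le> b" "z \<in> set_pmf (JJ ps D b)"
  shows "fst z \<in> {-1,0,1} \<and> 1 \<le> snd z \<and> 1 \<le> snd z + fst z"
  using assms unfolding JJ_def by (auto simp: rr_def split: if_splits)

lemma PsiPhi:
  assumes "set_pmf D \<subseteq> {-1,0,1}" "1 \<le> b"
  shows "map_pmf Psi (map_pmf Phi (JJ ps D b)) = JJ ps D b"
proof -
  have "map_pmf Psi (map_pmf Phi (JJ ps D b)) = map_pmf (\<lambda>z. z) (JJ ps D b)"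
    unfolding map_pmf_comp
  proof (rule map_pmf_cong[OF refl])
    fix z assume "z \<in> set_pmf (JJ ps D b)"
    then have "fst z \<in> {-1,0,1} \<and> 1 \<le> snd z \<and> 1 \<le> snd z + fst z" by (rule set_JJ[OF assms])
    then show "Psi (Phi z) = z" by (cases z) (auto simp: Psi_def Phi_def)
  qed
  thus ?thesis by simp
qed

lemma snd_bind: "map_pmf snd (bind_pmf G (JJ ps D)) = stepG ps D G"
proof -
  have "map_pmf snd (bind_pmf G (JJ ps D)) =
     bind_pmf G (\<lambda>b. bind_pmf (bernoulli_pmf ps) (\<lambda>h. bind_pmf D (\<lambda>d'. return_pmf (if h then rr d' else b + 1))))"
    unfolding map_bind_pmf JJ_def by simp
  also have "\<dots> = bind_pmf (bernoulli_pmf ps) (\<lambda>h. bind_pmf G (\<lambda>b. bind_pmf D (\<lambda>d'. return_pmf (if h then rr d' else b + 1))))"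
    by (rule bind_commute_pmf)
  also have "\<dots> = stepG ps D G"
    unfolding stepG_def
  proof (rule bind_pmf_cong[OF refl])
    fix h :: bool
    show "bind_pmf G (\<lambda>b. bind_pmf D (\<lambda>d'. return_pmf (if h then rr d' else b + 1))) =
      (if h then map_pmf rr D else map_pmf (\<lambda>b. b + 1) G)"
      by (cases h) (simp_all add: map_pmf_def)
  qed
  finally show ?thesis .
qed

lemma set_bindJ:
  assumes "set_pmf D \<subseteq> {-1,0,1}" "set_pmf G \<subseteq> {1..}" "z \<in> set_pmf (bind_pmf G (JJ ps D))"
  shows "fst z \<in> {-1,0,1} \<and> 1 \<le> snd z \<and> 1 \<le> snd z + fst z"
proof -
  obtain b where b: "b \<in> set_pmf G" "z \<in> set_pmf (JJ ps D b)" using assms(3) by auto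
  show ?thesis by (rule set_JJ[OF assms(1) _ b(2)]) (use b(1) assms(2) in auto)
qed

lemma stat_char:
  assumes "0 < ps" "ps < 1" "set_pmf D \<subseteq> {-1,0,1}" "stationary_pmf (aoi_kernel ps D) \<pi>"
  shows "map_pmf Psi \<pi> = bind_pmf (Gexp ps D) (JJ ps D)"
proof -
  define G where "G = map_pmf (\<lambda>y. snd (Psi y)) \<pi>"
  have sG: "set_pmf G \<subseteq> {1..}"
    using supp_stat[OF assms] by (auto simp: G_def Psi_def)
  have "map_pmf Psi \<pi> = map_pmf Psi (bind_pmf \<pi> (aoi_kernel ps D))"
    using assms(4) unfolding stationary_pmf_def by simp
  also have "\<dots> = bind_pmf \<pi> (\<lambda>y. map_pmf Psi (aoi_kernel ps D y))" by (rule map_bind_pmf)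
  also have "\<dots> = bind_pmf \<pi> (\<lambda>y. JJ ps D (snd (Psi y)))"
  proof (rule bind_pmf_cong[OF refl])
    fix y assume y: "y \<in> set_pmf \<pi>"
    obtain d a where da: "y = (d, a)" by (cases y)
    have h: "d \<in> {-1,0,1}" "1 \<le> int a - d" using supp_stat[OF assms, of d a] y da by auto
    show "map_pmf Psi (aoi_kernel ps D y) = JJ ps D (snd (Psi y))"
      unfolding da K_eq[OF assms(3) h] using PsiPhi[OF assms(3) h(2)] by (simp add: Psi_def)
  qed
  also have "\<dots> = bind_pmf G (JJ ps D)" unfolding G_def by (simp add: bind_map_pmf)
  finally have E: "map_pmf Psi \<pi> = bind_pmf G (JJ ps D)" .
  have "G = map_pmf snd (map_pmf Psi \<pi>)" unfolding G_def by (simp add: map_pmf_comp)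
  also have "\<dots> = stepG ps D G" unfolding E by (rule snd_bind)
  finally have "G = stepG ps D G" .
  hence "G = Gexp ps D" using Gexp_unique[OF assms(1,2,3) _ sG] by simp
  with E show ?thesis by simp
qed

lemma stat_snd:
  assumes "0 < ps" "ps < 1" "set_pmf D \<subseteq> {-1,0,1}" "stationary_pmf (aoi_kernel ps D) \<pi>"
  shows "map_pmf snd \<pi> = map_pmf (\<lambda>z. nat (snd z + fst z)) (bind_pmf (Gexp ps D) (JJ ps D))"
proof -
  have "map_pmf snd \<pi> = map_pmf (\<lambda>z. nat (snd z + fst z)) (map_pmf Psi \<pi>)"
    by (simp add: map_pmf_comp Psi_def case_prod_beta)
  thus ?thesis using stat_char[OF assms] by simp
qed

lemma stat_exists:
  assumes "0 < ps" "ps < 1" "set_pmf D \<subseteq> {-1,0,1}"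
  shows "stationary_pmf (aoi_kernel ps D) (map_pmf Phi (bind_pmf (Gexp ps D) (JJ ps D)))"
proof -
  let ?M = "bind_pmf (Gexp ps D) (JJ ps D)"
  have "bind_pmf (map_pmf Phi ?M) (aoi_kernel ps D) = bind_pmf ?M (\<lambda>z. aoi_kernel ps D (Phi z))"
    by (rule bind_map_pmf)
  also have "\<dots> = bind_pmf ?M (\<lambda>z. map_pmf Phi (JJ ps D (snd z)))"
  proof (rule bind_pmf_cong[OF refl])
    fix z assume z: "z \<in> set_pmf ?M"
    obtain d b where db: "z = (d, b)" by (cases z)
    have h: "d \<in> {-1,0,1}" "1 \<le> b" "1 \<le> b + d"
      using set_bindJ[OF assms(3) set_Gexp[OF assms(3)] z] db by auto
    have "Phi z = (d, nat (b + d))" by (simp add: db Phi_def)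
    moreover have "int (nat (b + d)) - d = b" using h by simp
    ultimately show "aoi_kernel ps D (Phi z) = map_pmf Phi (JJ ps D (snd z))"
      using K_eq[OF assms(3) h(1), of "nat (b + d)" ps] h db by simp
  qed
  also have "\<dots> = map_pmf Phi (bind_pmf ?M (\<lambda>z. JJ ps D (snd z)))" by (simp add: map_bind_pmf)
  also have "\<dots> = map_pmf Phi (bind_pmf (map_pmf snd ?M) (JJ ps D))" by (simp add: bind_map_pmf)
  also have "\<dots> = map_pmf Phi ?M" unfolding snd_bind Gexp_fix[OF assms(1,2)] ..
  finally show ?thesis unfolding stationary_pmf_def .
qed

lemma A_form:
  "map_pmf (\<lambda>z. nat (snd z + fst z)) (bind_pmf G (JJ ps D)) =
   bind_pmf (bernoulli_pmf ps) (\<lambda>h. if h then map_pmf (\<lambda>d. nat (rr d + d)) D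
      else bind_pmf D (\<lambda>d. map_pmf (\<lambda>b. nat (b + (1 + d))) G))"
proof -
  have "map_pmf (\<lambda>z. nat (snd z + fst z)) (bind_pmf G (JJ ps D)) =
     bind_pmf G (\<lambda>b. bind_pmf (bernoulli_pmf ps) (\<lambda>h. bind_pmf D (\<lambda>d'. return_pmf (nat ((if h then rr d' else b + 1) + d')))))"
    unfolding map_bind_pmf JJ_def by simp
  also have "\<dots> = bind_pmf (bernoulli_pmf ps) (\<lambda>h. bind_pmf G (\<lambda>b. bind_pmf D (\<lambda>d'. return_pmf (nat ((if h then rr d' else b + 1) + d')))))"
    by (rule bind_commute_pmf)
  also have "\<dots> = bind_pmf (bernoulli_pmf ps) (\<lambda>h. if h then map_pmf (\<lambda>d. nat (rr d + d)) D
      else bind_pmf D (\<lambda>d. map_pmf (\<lambda>b. nat (b + (1 + d))) G))"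
  proof (rule bind_pmf_cong[OF refl])
    fix h :: bool
    show "bind_pmf G (\<lambda>b. bind_pmf D (\<lambda>d'. return_pmf (nat ((if h then rr d' else b + 1) + d')))) =
      (if h then map_pmf (\<lambda>d. nat (rr d + d)) D else bind_pmf D (\<lambda>d. map_pmf (\<lambda>b. nat (b + (1 + d))) G))"
    proof (cases h)
      case True then show ?thesis by (simp add: map_pmf_def)
    next
      case False
      have "bind_pmf G (\<lambda>b. bind_pmf D (\<lambda>d'. return_pmf (nat ((b + 1) + d')))) =
        bind_pmf D (\<lambda>d'. bind_pmf G (\<lambda>b. return_pmf (nat ((b + 1) + d'))))" by (rule bind_commute_pmf)
      then show ?thesis using False by (simp add: map_pmf_def ac_simps)
    qed
  qed
  finally show ?thesis .
qed

lemma pmf_shift_nat: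
  assumes "1 \<le> i"
  shows "pmf (map_pmf (\<lambda>b::int. nat (b + c)) M) i = pmf M (int i - c)"
proof -
  have "(\<lambda>b::int. nat (b + c)) -` {i} = {int i - c}" using assms by auto
  thus ?thesis by (simp add: pmf_map measure_pmf_single)
qed

lemma pmf_A:
  assumes "0 < ps" "ps < 1" "set_pmf D \<subseteq> {-1,0,1}" "pmf D (-1) + pmf D 0 + pmf D 1 = 1" "1 \<le> i"
  shows "pmf (map_pmf (\<lambda>z. nat (snd z + fst z)) (bind_pmf (Gexp ps D) (JJ ps D))) i =
    ps * (if i = 1 then pmf D (-1) + pmf D 0 else if i = 2 then pmf D 1 else 0) +
    (1 - ps) * (gv ps (pmf D (-1)) (int i) * pmf D (-1) + gv ps (pmf D (-1)) (int i - 1) * pmf D 0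
      + gv ps (pmf D (-1)) (int i - 2) * pmf D 1)"
proof -
  have h1: "pmf (map_pmf (\<lambda>d. nat (rr d + d)) D) i = (if i = 1 then pmf D (-1) + pmf D 0 else if i = 2 then pmf D 1 else 0)"
    using assms(5) by (subst pmf_map_D[OF assms(3)]) (auto simp: rr_def)
  have h2: "pmf (bind_pmf D (\<lambda>d. map_pmf (\<lambda>b. nat (b + (1 + d))) (Gexp ps D))) i =
     gv ps (pmf D (-1)) (int i) * pmf D (-1) + gv ps (pmf D (-1)) (int i - 1) * pmf D 0
      + gv ps (pmf D (-1)) (int i - 2) * pmf D 1"
    apply (subst pmf_bind_D[OF assms(3)])
    apply (subst pmf_shift_nat[OF assms(5)])+
    apply (simp add: Gexp_val[OF assms(1-4)] algebra_simps)
    done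
  show ?thesis
    unfolding A_form pmf_bind using assms(1,2) h1 h2 by (simp add: mult.commute)
qed

lemma val_eq:
  fixes ps qm q0 q1 :: real
  assumes "1 \<le> i"
  shows "ps * (if i = 1 then qm + q0 else if i = 2 then q1 else 0) +
    (1 - ps) * (gv ps qm (int i) * qm + gv ps qm (int i - 1) * q0 + gv ps qm (int i - 2) * q1)
    = aoi_ss ps qm q0 q1 i"
proof -
  have "i = 1 \<or> i = 2 \<or> i = 3 \<or> i = (i - 4) + 4" using assms by arith
  then consider "i = 1" | "i = 2" | "i = 3" | n where "i = n + 4" by blast
  then show ?thesis
  proof cases
    case 1 then show ?thesis by (simp add: gv_def aoi_ss_def Let_def algebra_simps)
  next
    case 2 then show ?thesis by (simp add: gv_def aoi_ss_def Let_def algebra_simps)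
  next
    case 3 then show ?thesis by (simp add: gv_def aoi_ss_def Let_def algebra_simps power2_eq_square)
  next
    case 4
    have g1: "gv ps qm (int i) = ps*(1-ps)^(n+3)*(1-qm) + ps*(1-ps)^(n+2)*qm"
      unfolding gv_def 4 by (simp add: nat_add_distrib ac_simps)
    have g2: "gv ps qm (int i - 1) = ps*(1-ps)^(n+2)*(1-qm) + ps*(1-ps)^(n+1)*qm"
      unfolding gv_def 4 by (simp add: nat_add_distrib ac_simps)
    have g3: "gv ps qm (int i - 2) = ps*(1-ps)^(n+1)*(1-qm) + ps*(1-ps)^n*qm"
      unfolding gv_def 4 by (simp add: nat_add_distrib ac_simps)
    have a: "aoi_ss ps qm q0 q1 i = (qm * ps * (1-ps)^(n+3) + q0 * ps * (1-ps)^(n+2) + q1 * ps * (1-ps)^(n+1)) * (1 - ps * (1 - qm))"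
      unfolding aoi_ss_def 4 by (simp add: Let_def ac_simps)
    show ?thesis unfolding a g1 g2 g3 using 4 by (simp add: power_add power3_eq_cube power2_eq_square algebra_simps)
  qed
qed

lemma sum_eq:
  fixes ps qm q0 q1 :: real
  assumes "0 < ps" "ps < 1" "qm + q0 + q1 = 1"
  shows "(\<lambda>i. real i * aoi_ss ps qm q0 q1 i) sums (q1 + 1 / ps)"
proof -
  define pf where "pf = 1 - ps"
  define K where "K = (1 - ps * (1 - qm)) * ps * pf * (qm * pf^2 + q0 * pf + q1)"
  have pf: "norm pf < 1" "1 - pf = ps" using assms by (auto simp: pf_def)
  have e: "real (n + 4) * aoi_ss ps qm q0 q1 (n + 4) = K * (of_nat (Suc n) * pf ^ n + 3 * pf ^ n)" for n
    unfolding aoi_ss_def K_def pf_def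
    by (simp add: Let_def power_add power3_eq_cube power2_eq_square algebra_simps)
  have s1: "(\<lambda>n. of_nat (Suc n) * pf ^ n) sums (1 / ps^2)"
    using geometric_deriv_sums[OF pf(1)] pf(2) by simp
  have s2: "(\<lambda>n. 3 * pf ^ n) sums (3 * (1 / ps))"
    using sums_mult[OF geometric_sums[OF pf(1)], of 3] pf(2) by simp
  have "(\<lambda>n. real (n + 4) * aoi_ss ps qm q0 q1 (n + 4)) sums (K * (1 / ps^2 + 3 * (1 / ps)))"
    unfolding e by (rule sums_mult[OF sums_add[OF s1 s2]])
  hence S: "(\<lambda>i. real i * aoi_ss ps qm q0 q1 i) sums (K * (1 / ps^2 + 3 * (1 / ps)) +
      (\<Sum>i<4. real i * aoi_ss ps qm q0 q1 i))"
    using sums_iff_shift[of "\<lambda>i. real i * aoi_ss ps qm q0 q1 i" 4] by simp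
  have fin: "(\<Sum>i<4. real i * aoi_ss ps qm q0 q1 i) = aoi_ss ps qm q0 q1 1 + 2 * aoi_ss ps qm q0 q1 2 + 3 * aoi_ss ps qm q0 q1 3"
    by (simp add: numeral_eq_Suc)
  have q1: "q1 = 1 - qm - q0" using assms(3) by simp
  have "K * (1 / ps^2 + 3 * (1 / ps)) + (aoi_ss ps qm q0 q1 1 + 2 * aoi_ss ps qm q0 q1 2 + 3 * aoi_ss ps qm q0 q1 3)
      = q1 + 1 / ps"
    unfolding K_def pf_def aoi_ss_def Let_def q1 using assms(1)
    by (simp add: field_simps power2_eq_square)
  with S fin show ?thesis by simp
qed

theorem mainTheorem4:
  fixes ps qm q0 q1 :: real and D :: "int pmf"
  assumes "0 < ps" and "ps < 1"
    and "pmf D (-1) = qm" and "pmf D 0 = q0" and "pmf D 1 = q1"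
    and "qm + q0 + q1 = 1"
  shows "(\<exists>\<pi>. stationary_pmf (aoi_kernel ps D) \<pi>) \<and>
         (\<forall>\<pi>. stationary_pmf (aoi_kernel ps D) \<pi> \<longrightarrow>
            (\<forall>i::nat. i \<ge> 1 \<longrightarrow> pmf (map_pmf snd \<pi>) i = aoi_ss ps qm q0 q1 i) \<and>
            (\<lambda>i. real i * pmf (map_pmf snd \<pi>) i) sums (q1 + 1 / ps))"
proof -
  have sum1: "pmf D (-1) + pmf D 0 + pmf D 1 = 1" using assms(3-6) by simp
  have sD: "set_pmf D \<subseteq> {-1,0,1}" by (rule setD[OF sum1])
  have ex: "\<exists>\<pi>. stationary_pmf (aoi_kernel ps D) \<pi>"
    using stat_exists[OF assms(1,2) sD] by blast
  have main: "(\<forall>i::nat. i \<ge> 1 \<longrightarrow> pmf (map_pmf snd \<pi>) i = aoi_ss ps qm q0 q1 i) \<and>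
            (\<lambda>i. real i * pmf (map_pmf snd \<pi>) i) sums (q1 + 1 / ps)"
    if st: "stationary_pmf (aoi_kernel ps D) \<pi>" for \<pi>
  proof -
    have v: "pmf (map_pmf snd \<pi>) i = aoi_ss ps qm q0 q1 i" if i: "1 \<le> i" for i
      unfolding stat_snd[OF assms(1,2) sD st] pmf_A[OF assms(1,2) sD sum1 i] assms(3-5)
      by (rule val_eq[OF i])
    have "(\<lambda>i. real i * pmf (map_pmf snd \<pi>) i) = (\<lambda>i. real i * aoi_ss ps qm q0 q1 i)"
    proof
      fix i :: nat
      show "real i * pmf (map_pmf snd \<pi>) i = real i * aoi_ss ps qm q0 q1 i"
        by (cases "i = 0") (simp_all add: v)
    qed
    with sum_eq[OF assms(1,2,6)] v show ?thesis by simp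
  qed
  from ex main show ?thesis by blast
qed

end
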